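(* Let $d\ge2$ and assume that for all finite families $\mathcal{G}\subseteq\binom{\mathbb{N}}{d-1}$ one has $\mathrm{Inc}(\mathcal{C}(\mathcal{G}))\subseteq\mathcal{C}(\mathrm{Inc}(\mathcal{G}))$. Then: (i) for all $k\in\mathbb{N}$ and all finite families $\mathcal{G}\subseteq\binom{\mathbb{N}_{>k}}{d-1}$ one has $\mathrm{Inc}(\mathcal{C}_{>k}(\mathcal{G}))\subseteq\mathcal{C}_{>k}(\mathrm{Inc}(\mathcal{G}))$; (ii) for all finite families $\mathcal{F}\subseteq\binom{\mathbb{N}}{d}$ one has $\mathrm{Inc}(\mathcal{C}^{(l)}(\mathcal{F}))\subseteq\mathcal{C}^{(l)}(\mathrm{Inc}(\mathcal{F}))$ and $\mathrm{Inc}(\mathcal{C}^{(r)}(\mathcal{F}))\subseteq\mathcal{C}^{(r)}(\mathrm{Inc}(\mathcal{F}))$.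
   Context: $\mathbb{N}=\{1,2,3,\dots\}$, $\mathbb{N}_{>k}=\{k+1,k+2,\dots\}$. $\binom{S}{d}$ is the set of $d$-element subsets of $S$; elements are written $\mathbf{u}=(u_1,\ldots,u_d)$ with $u_1<\cdots<u_d$, and $(k,\widehat{\mathbf{u}})$ denotes $\{k\}\cup\widehat{\mathbf{u}}$ (with $k<\min\widehat{\mathbf u}$), $(\widehat{\mathbf{u}},k)$ denotes $\widehat{\mathbf{u}}\cup\{k\}$ (with $\max\widehat{\mathbf u}<k$). Squashed order: $\mathbf{u}<\mathbf{v}$ iff the largest element of the symmetric difference of $\mathbf{u},\mathbf{v}$ belongs to $\mathbf{v}$. For finite $\mathcal{G}\subseteq\binom{\mathbb{N}}{e}$, $\mathcal{C}(\mathcal{G})$ is the set of the $|\mathcal{G}|$ smallest elements of $\binom{\mathbb{N}}{e}$; for finite $\mathcal{G}\subseteq\binom{\mathbb{N}_{>k}}{e}$, $\mathcal{C}_{>k}(\mathcal{G})$ is the set of the $|\mathcal{G}|$ smallest elements of $\binom{\mathbb{N}_{>k}}{e}$. $\mathrm{Inc}_1$ is the set of maps $\pi\colon\mathbb{N}\to\mathbb{N}$ with $\pi(j)<\pi(j+1)$ and $\pi(j)\le j+1$ for all $j$, acting by $\pi(\mathbf{u})=(\pi(u_1),\ldots,\pi(u_e))$; $\mathrm{Inc}(\mathcal{G})=\{\pi(\mathbf{u})\mid\mathbf{u}\in\mathcal{G},\pi\in\mathrm{Inc}_1\}$. For $\mathcal{F}\subseteq\binom{\mathbb{N}}{d}$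 and $k\ge1$: $\widehat{\mathcal{F}}_{1,k}=\{\widehat{\mathbf{u}}\mid (k,\widehat{\mathbf{u}})\in\mathcal{F}\}\subseteq\binom{\mathbb{N}_{>k}}{d-1}$, $\widehat{\mathcal{F}}_{d,k}=\{\widehat{\mathbf{u}}\mid(\widehat{\mathbf{u}},k)\in\mathcal{F}\}$. Left partial compression: $\mathcal{C}^{(l)}(\mathcal{F})=\bigcup_{k\ge1}\{(k,\widehat{\mathbf{u}})\mid\widehat{\mathbf{u}}\in\mathcal{C}_{>k}(\widehat{\mathcal{F}}_{1,k})\}$; right partial compression: $\mathcal{C}^{(r)}(\mathcal{F})=\bigcup_{k\ge1}\{(\widehat{\mathbf{u}},k)\mid\widehat{\mathbf{u}}\in\mathcal{C}(\widehat{\mathcal{F}}_{d,k})\}$. *)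

theory Defs
  imports Main
begin

text \<open>Positive integers are modelled as nat values > 0, so the paper's N is {0<..}
  and N_{>k} is {k<..}.\<close>

definition binom :: "nat set \<Rightarrow> nat \<Rightarrow> nat set set" where
  "binom S e = {u. u \<subseteq> S \<and> finite u \<and> card u = e}"

definition sq_less :: "nat set \<Rightarrow> nat set \<Rightarrow> bool" where
  "sq_less u v \<longleftrightarrow> u \<noteq> v \<and> Max ((u - v) \<union> (v - u)) \<in> v"

text \<open>The |G| smallest elements of binom N_{>k} e in squashed order: those elements
  having fewer than |G| predecessors.\<close>
definition comp_gt :: "nat \<Rightarrow> nat \<Rightarrow> nat set set \<Rightarrow> nat set set" where
  "comp_gt k e G = {u \<in> binom {k<..} e.
      card {v \<in> binom {k<..} e. sq_less v u} < card G}"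

definition comp :: "nat \<Rightarrow> nat set set \<Rightarrow> nat set set" where
  "comp e G = comp_gt 0 e G"

definition Inc1 :: "(nat \<Rightarrow> nat) set" where
  "Inc1 = {\<pi>. \<forall>j\<ge>1. 1 \<le> \<pi> j \<and> \<pi> j < \<pi> (Suc j) \<and> \<pi> j \<le> j + 1}"

definition Inc :: "nat set set \<Rightarrow> nat set set" where
  "Inc G = {\<pi> ` u | u \<pi>. u \<in> G \<and> \<pi> \<in> Inc1}"

definition hat_first :: "nat set set \<Rightarrow> nat \<Rightarrow> nat set set" where
  "hat_first F k = {w. (\<forall>x\<in>w. k < x) \<and> insert k w \<in> F}"

definition hat_last :: "nat set set \<Rightarrow> nat \<Rightarrow> nat set set" where
  "hat_last F k = {w. (\<forall>x\<in>w. x < k) \<and> insert k w \<in> F}"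

definition comp_left :: "nat \<Rightarrow> nat set set \<Rightarrow> nat set set" where
  "comp_left d F = (\<Union>k\<in>{1..}. {insert k w | w. w \<in> comp_gt k (d - 1) (hat_first F k)})"

definition comp_right :: "nat \<Rightarrow> nat set set \<Rightarrow> nat set set" where
  "comp_right d F = (\<Union>k\<in>{1..}. {insert k w | w. w \<in> comp (d - 1) (hat_last F k)})"

end

theory Submission imports Defs begin

definition sh :: "nat \<Rightarrow> nat \<Rightarrow> nat" where "sh m j = (if j < m then j else Suc j)"
definition dn :: "nat \<Rightarrow> nat set \<Rightarrow> nat set" where "dn k u = (\<lambda>x. x - k) ` u"
definition up :: "nat \<Rightarrow> nat set \<Rightarrow> nat set" where "up k u = (\<lambda>x. x + k) ` u"
definition predset :: "nat \<Rightarrow> nat \<Rightarrow> nat set \<Rightarrow> nat set set" where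
  "predset k e u = {v \<in> binom {k<..} e. sq_less v u}"

lemma sh_Inc1: "m \<ge> 1 \<Longrightarrow> sh m \<in> Inc1"
  by (auto simp: sh_def Inc1_def)

lemma sh_mono: "mono (sh m)"
  by (auto simp: mono_def sh_def)

lemma sh_inj: "inj (sh m)"
  by (auto simp: inj_def sh_def split: if_splits)

lemma sh_ge: "j \<le> sh m j" by (auto simp: sh_def)

lemma Inc1_ge: assumes "\<pi> \<in> Inc1" "j \<ge> 1" shows "j \<le> \<pi> j"
  using assms(2)
proof (induction j rule: dec_induct)
  case base then show ?case using assms(1) by (auto simp: Inc1_def)
next
  case (step n)
  then have "\<pi> n < \<pi> (Suc n)" using assms(1) by (auto simp: Inc1_def)
  then show ?case using step by simp
qed

lemma Inc1_sh:
  assumes "\<pi> \<in> Inc1" "finite u" "u \<subseteq> {0<..}"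
  shows "\<exists>m\<ge>1. \<forall>j\<in>u. \<pi> j = sh m j"
proof (cases "\<exists>j\<ge>1. \<pi> j \<noteq> j")
  case True
  define m where "m = (LEAST j. j \<ge> 1 \<and> \<pi> j \<noteq> j)"
  have m1: "m \<ge> 1" "\<pi> m \<noteq> m" using LeastI_ex[OF True] unfolding m_def by auto
  have lo: "\<pi> j = j" if "j \<ge> 1" "j < m" for j
    using not_less_Least[of j "\<lambda>j. j \<ge> 1 \<and> \<pi> j \<noteq> j"] that unfolding m_def by auto
  have hi: "\<pi> j = Suc j" if "j \<ge> m" for j
    using that
  proof (induction j rule: dec_induct)
    case base
    have "m \<le> \<pi> m" using Inc1_ge[OF assms(1) m1(1)] .
    moreover have "\<pi> m \<le> m + 1" using assms(1) m1(1) by (auto simp: Inc1_def)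
    ultimately show ?case using m1 by linarith
  next
    case (step n)
    have "n \<ge> 1" using step m1 by auto
    then have "\<pi> n < \<pi> (Suc n)" "\<pi> (Suc n) \<le> Suc n + 1" using assms(1) by (auto simp: Inc1_def)
    then show ?case using step by simp
  qed
  show ?thesis
  proof (intro exI[of _ m] conjI ballI)
    fix j assume "j \<in> u"
    then have "j \<ge> 1" using assms(3) by auto
    then show "\<pi> j = sh m j" using lo hi by (auto simp: sh_def)
  qed (rule m1)
next
  case False
  define m where "m = Suc (Max (insert 0 u))"
  show ?thesis
  proof (intro exI[of _ m] conjI ballI)
    fix j assume j: "j \<in> u"
    then have "j < m" using assms(2) unfolding m_def by (simp add: le_imp_less_Suc)
    moreover have "j \<ge> 1" using j assms(3) by auto
    ultimately show "\<pi> j = sh m j" using False by (auto simp: sh_def)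
  qed (simp add: m_def)
qed

lemma Inc_elem:
  assumes "z \<in> Inc G" "\<And>u. u \<in> G \<Longrightarrow> finite u \<and> u \<subseteq> {0<..}"
  shows "\<exists>u\<in>G. \<exists>m\<ge>1. z = sh m ` u"
proof -
  obtain u \<pi> where z: "z = \<pi> ` u" "u \<in> G" "\<pi> \<in> Inc1" using assms(1) by (auto simp: Inc_def)
  obtain m where m: "m \<ge> 1" "\<forall>j\<in>u. \<pi> j = sh m j" using Inc1_sh[OF z(3)] assms(2)[OF z(2)] by blast
  have "z = sh m ` u" using z(1) m(2) by (auto intro: image_cong)
  then show ?thesis using z m by blast
qed

lemma Inc_intro: "u \<in> G \<Longrightarrow> m \<ge> 1 \<Longrightarrow> sh m ` u \<in> Inc G"
  using sh_Inc1 unfolding Inc_def by blast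

lemma finite_Inc:
  assumes "finite G" "\<And>u. u \<in> G \<Longrightarrow> finite u \<and> u \<subseteq> {0<..}"
  shows "finite (Inc G)"
proof -
  define N where "N = Max (insert 0 (\<Union>G))"
  have fin: "finite (\<Union>G)" using assms by auto
  have "Inc G \<subseteq> Pow {..Suc N}"
  proof
    fix z assume "z \<in> Inc G"
    then obtain u m where "u \<in> G" "z = sh m ` u" using Inc_elem[OF _ assms(2)] by blast
    moreover have "x \<le> N" if "x \<in> u" "u \<in> G" for x u
      unfolding N_def using fin that by (intro Max_ge) auto
    ultimately show "z \<in> Pow {..Suc N}" by (force simp: sh_def)
  qed
  then show ?thesis using finite_subset by blast
qed

lemma sq_less_image:
  assumes "mono f" "inj_on f A" "u \<subseteq> A" "v \<subseteq> A" "finite u" "finite v"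
  shows "sq_less (f`u) (f`v) \<longleftrightarrow> sq_less u v"
proof -
  define S where "S = (u - v) \<union> (v - u)"
  have img: "(f`u - f`v) \<union> (f`v - f`u) = f ` S"
  proof -
    have "f ` (u - v) = f ` u - f ` v" using assms(2-4) by (intro inj_on_image_set_diff) auto
    moreover have "f ` (v - u) = f ` v - f ` u" using assms(2-4) by (intro inj_on_image_set_diff) auto
    ultimately show ?thesis unfolding S_def by (simp add: image_Un)
  qed
  have neq: "f`u \<noteq> f`v \<longleftrightarrow> u \<noteq> v" using assms(2-4) inj_on_image_eq_iff by metis
  show ?thesis
  proof (cases "u = v")
    case True then show ?thesis by (simp add: sq_less_def)
  next
    case False
    then have "S \<noteq> {}" "finite S" unfolding S_def using assms by auto
    then have mx: "Max (f ` S) = f (Max S)" using mono_Max_commute[OF assms(1)] by metis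
    have "Max S \<in> S" using \<open>S \<noteq> {}\<close> \<open>finite S\<close> by simp
    then have "Max S \<in> A" unfolding S_def using assms by auto
    then have "f (Max S) \<in> f ` v \<longleftrightarrow> Max S \<in> v" using assms(2,4) by (simp add: inj_on_image_mem_iff)
    then have "(Max (f ` S) \<in> f ` v) = (Max S \<in> v)" using mx by simp
    then show ?thesis unfolding sq_less_def img neq using False by (simp add: S_def)
  qed
qed


lemma comp_gt_iff: "u \<in> comp_gt k e G \<longleftrightarrow> u \<in> binom {k<..} e \<and> card (predset k e u) < card G"
  by (simp add: comp_gt_def predset_def)

lemma comp_gt_mono: "card G \<le> card H \<Longrightarrow> comp_gt k e G \<subseteq> comp_gt k e H"
  by (auto simp: comp_gt_iff)

lemma predset_finite: assumes "finite u" shows "finite (predset k e u)"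
proof -
  define N where "N = Max (insert 0 u)"
  have "predset k e u \<subseteq> Pow {..N}"
  proof
    fix v assume v: "v \<in> predset k e u"
    then have fv: "finite v" "sq_less v u" by (auto simp: predset_def binom_def)
    show "v \<in> Pow {..N}"
    proof (rule PowI, rule subsetI)
      fix y assume y: "y \<in> v"
      show "y \<in> {..N}"
      proof (cases "y \<in> u")
        case True then show ?thesis using assms unfolding N_def by simp
      next
        case False
        define S where "S = (v - u) \<union> (u - v)"
        have "finite S" "y \<in> S" using fv assms y False unfolding S_def by auto
        then have "y \<le> Max S" by simp
        moreover have "Max S \<in> u" using fv(2) unfolding sq_less_def S_def by auto
        then have "Max S \<le> N" using assms unfolding N_def by simp
        moreover note this
        ultimately show ?thesis by simp
      qed
    qed
  qed
  then show ?thesis using finite_subset by blast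
qed

lemma up_dn: "v \<subseteq> {k<..} \<Longrightarrow> up k (dn k v) = v"
  unfolding up_def dn_def by (force simp: image_image)

lemma dn_up: "dn k (up k v) = v"
  unfolding up_def dn_def by (simp add: image_image)

lemma inj_on_dn: "inj_on (\<lambda>x::nat. x - k) {k<..}"
  by (auto simp: inj_on_def)

lemma dn_binom: "v \<in> binom {k<..} e \<Longrightarrow> dn k v \<in> binom {0<..} e"
  unfolding binom_def dn_def
  using card_image[OF inj_on_subset[OF inj_on_dn]] by auto

lemma up_binom: "v \<in> binom {k'<..} e \<Longrightarrow> up k v \<in> binom {k'+k<..} e"
  unfolding binom_def up_def by (auto simp: card_image)

lemma dn_sq_less: "v \<in> binom {k<..} e \<Longrightarrow> u \<in> binom {k<..} e' \<Longrightarrow>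
   sq_less (dn k v) (dn k u) \<longleftrightarrow> sq_less v u"
  unfolding dn_def binom_def
  by (rule sq_less_image[OF _ inj_on_dn]) (auto simp: mono_def)

lemma predset_dn:
  assumes u: "u \<in> binom {k<..} e"
  shows "card (predset k e u) = card (predset 0 e (dn k u))"
proof -
  have "predset 0 e (dn k u) = dn k ` predset k e u"
  proof
    show "dn k ` predset k e u \<subseteq> predset 0 e (dn k u)"
      using dn_binom dn_sq_less[OF _ u] by (auto simp: predset_def)
  next
    show "predset 0 e (dn k u) \<subseteq> dn k ` predset k e u"
    proof
      fix v' assume v': "v' \<in> predset 0 e (dn k u)"
      then have b: "up k v' \<in> binom {k<..} e" using up_binom[of v' 0 e k] by (auto simp: predset_def add.commute)
      have "sq_less (dn k (up k v')) (dn k u)" using v' by (simp add: dn_up predset_def)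
      then have "sq_less (up k v') u" using dn_sq_less[OF b u] by simp
      then have "up k v' \<in> predset k e u" using b by (simp add: predset_def)
      then show "v' \<in> dn k ` predset k e u" by (metis dn_up image_eqI)
    qed
  qed
  moreover have "inj_on (dn k) (predset k e u)"
    by (rule inj_on_inverseI[where g="up k"]) (simp add: predset_def binom_def up_dn)
  ultimately show ?thesis by (simp add: card_image)
qed

lemma comp_gt_shift:
  assumes "u \<in> comp_gt k e G" "card G \<le> card H"
  shows "up c u \<in> comp_gt (k + c) e H"
proof -
  have u: "u \<in> binom {k<..} e" "card (predset k e u) < card G" using assms(1) by (auto simp: comp_gt_iff)
  have b: "up c u \<in> binom {k+c<..} e" using up_binom[OF u(1)] .
  have "dn (k + c) (up c u) = dn k u" unfolding dn_def up_def by (simp add: image_image)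
  then have "card (predset (k+c) e (up c u)) = card (predset k e u)"
    using predset_dn[OF b] predset_dn[OF u(1)] by simp
  then show ?thesis using b u assms(2) by (simp add: comp_gt_iff)
qed


lemma binom_pos: "u \<in> binom {k<..} e \<Longrightarrow> finite u \<and> u \<subseteq> {0<..}"
  by (auto simp: binom_def)

lemma sh_binom: "u \<in> binom {k<..} e \<Longrightarrow> sh m ` u \<in> binom {k<..} e"
  unfolding binom_def using sh_ge[of _ m] card_image[OF inj_on_subset[OF sh_inj]]
  by (auto intro: less_le_trans)

lemma part1:
  assumes hyp: "\<And>G. finite G \<Longrightarrow> G \<subseteq> binom {0<..} e \<Longrightarrow> Inc (comp e G) \<subseteq> comp e (Inc G)"
    and G: "finite G" "G \<subseteq> binom {k<..} e"
  shows "Inc (comp_gt k e G) \<subseteq> comp_gt k e (Inc G)"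
proof
  fix z assume "z \<in> Inc (comp_gt k e G)"
  moreover have "\<And>u. u \<in> comp_gt k e G \<Longrightarrow> finite u \<and> u \<subseteq> {0<..}"
    using binom_pos by (auto simp: comp_gt_iff)
  ultimately obtain u m where u: "u \<in> comp_gt k e G" "m \<ge> 1" "z = sh m ` u"
    using Inc_elem[of z "comp_gt k e G"] by blast
  have ub: "u \<in> binom {k<..} e" "card (predset k e u) < card G" using u(1) by (auto simp: comp_gt_iff)
  define G' where "G' = dn k ` G"
  have injG: "inj_on (dn k) G"
    by (rule inj_on_inverseI[where g="up k"]) (use G in \<open>auto simp: binom_def up_dn\<close>)
  have G'b: "G' \<subseteq> binom {0<..} e" "finite G'" using G dn_binom unfolding G'_def by auto
  have cG': "card G' = card G" unfolding G'_def using injG by (simp add: card_image)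
  have u': "dn k u \<in> comp e G'"
    using ub dn_binom[OF ub(1)] predset_dn[OF ub(1)] cG' by (simp add: comp_def comp_gt_iff)
  define m' where "m' = (if k < m then m - k else 1)"
  have m'1: "m' \<ge> 1" unfolding m'_def by auto
  have "sh m' ` dn k u \<in> Inc (comp e G')" using Inc_intro[OF u' m'1] .
  then have "sh m' ` dn k u \<in> comp e (Inc G')" using hyp[OF G'b(2,1)] by blast
  then have c1: "card (predset 0 e (sh m' ` dn k u)) < card (Inc G')" by (simp add: comp_def comp_gt_iff)
  have eq: "dn k (sh m ` u) = sh m' ` dn k u"
  proof -
    have "sh m x - k = sh m' (x - k)" if "x \<in> u" for x
    proof -
      have "x > k" using that ub(1) by (auto simp: binom_def)
      then show ?thesis unfolding m'_def sh_def using u(2) by auto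
    qed
    then show ?thesis unfolding dn_def by (auto simp: image_image intro: image_cong)
  qed
  have zb: "z \<in> binom {k<..} e" using sh_binom[OF ub(1)] u(3) by simp
  have finIG: "finite (Inc G)" using finite_Inc[OF G(1)] G(2) binom_pos by blast
  have "Inc G' \<subseteq> dn k ` Inc G"
  proof
    fix y assume "y \<in> Inc G'"
    then obtain v' m2 where v': "v' \<in> G'" "m2 \<ge> 1" "y = sh m2 ` v'"
      using Inc_elem[of y G'] G'b binom_pos by blast
    then obtain v where v: "v \<in> G" "v' = dn k v" unfolding G'_def by blast
    have "y = dn k (sh (m2 + k) ` v)"
    proof -
      have "sh (m2 + k) x - k = sh m2 (x - k)" if "x \<in> v" for x
      proof -
        have "x > k" using that v(1) G(2) by (auto simp: binom_def)
        then show ?thesis unfolding sh_def by auto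
      qed
      then show ?thesis unfolding v'(3) v(2) dn_def by (auto simp: image_image intro: image_cong)
    qed
    moreover have "sh (m2 + k) ` v \<in> Inc G" using Inc_intro[OF v(1)] v'(2) by simp
    ultimately show "y \<in> dn k ` Inc G" by blast
  qed
  then have "card (Inc G') \<le> card (Inc G)"
    using finIG by (meson card_image_le card_mono finite_imageI le_trans)
  then show "z \<in> comp_gt k e (Inc G)"
    using zb c1 predset_dn[OF zb] eq u(3) by (simp add: comp_gt_iff)
qed


lemma hat_first_binom:
  assumes "F \<subseteq> binom {0<..} d" shows "hat_first F k \<subseteq> binom {k<..} (d - 1)"
proof
  fix w assume "w \<in> hat_first F k"
  then have w: "\<forall>x\<in>w. k < x" "insert k w \<in> F" by (auto simp: hat_first_def)
  then have "finite w" "card (insert k w) = d" using assms by (auto simp: binom_def)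
  moreover have "k \<notin> w" using w by auto
  ultimately show "w \<in> binom {k<..} (d - 1)" using w by (auto simp: binom_def)
qed

lemma hat_last_binom:
  assumes "F \<subseteq> binom {0<..} d" shows "hat_last F k \<subseteq> binom {0<..} (d - 1)"
proof
  fix w assume "w \<in> hat_last F k"
  then have w: "\<forall>x\<in>w. x < k" "insert k w \<in> F" by (auto simp: hat_last_def)
  then have "finite w" "card (insert k w) = d" "insert k w \<subseteq> {0<..}" using assms by (auto simp: binom_def)
  moreover have "k \<notin> w" using w by auto
  ultimately show "w \<in> binom {0<..} (d - 1)" using w by (auto simp: binom_def)
qed

lemma hat_first_finite: "finite F \<Longrightarrow> finite (hat_first F k)"
proof -
  assume "finite F"
  moreover have "hat_first F k \<subseteq> (\<lambda>z. z - {k}) ` F"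
  proof
    fix w assume "w \<in> hat_first F k"
    then have "insert k w \<in> F" "w = insert k w - {k}" by (auto simp: hat_first_def)
    then show "w \<in> (\<lambda>z. z - {k}) ` F" by blast
  qed
  ultimately show ?thesis using finite_subset by blast
qed

lemma hat_last_finite: "finite F \<Longrightarrow> finite (hat_last F k)"
proof -
  assume "finite F"
  moreover have "hat_last F k \<subseteq> (\<lambda>z. z - {k}) ` F"
  proof
    fix w assume "w \<in> hat_last F k"
    then have "insert k w \<in> F" "w = insert k w - {k}" by (auto simp: hat_last_def)
    then show "w \<in> (\<lambda>z. z - {k}) ` F" by blast
  qed
  ultimately show ?thesis using finite_subset by blast
qed

lemma Inc_binom: "F \<subseteq> binom {0<..} d \<Longrightarrow> Inc F \<subseteq> binom {0<..} d"
  using Inc_elem[of _ F] binom_pos sh_binom by blast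

lemma part_left:
  assumes P: "\<forall>k\<ge>1. \<forall>G. finite G \<and> G \<subseteq> binom {k<..} (d - 1) \<longrightarrow>
            Inc (comp_gt k (d - 1) G) \<subseteq> comp_gt k (d - 1) (Inc G)"
    and F: "finite F" "F \<subseteq> binom {0<..} d"
  shows "Inc (comp_left d F) \<subseteq> comp_left d (Inc F)"
proof
  fix z assume "z \<in> Inc (comp_left d F)"
  then obtain y \<pi> where y: "z = \<pi> ` y" "y \<in> comp_left d F" "\<pi> \<in> Inc1" by (auto simp: Inc_def)
  then obtain k w where kw: "k \<ge> 1" "w \<in> comp_gt k (d - 1) (hat_first F k)" "y = insert k w"
    by (auto simp: comp_left_def)
  have wb: "w \<in> binom {k<..} (d - 1)" using kw(2) by (simp add: comp_gt_iff)
  then have "finite (insert k w)" "insert k w \<subseteq> {0<..}" using kw(1) by (auto simp: binom_def)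
  then obtain m where m: "m \<ge> 1" "\<forall>j\<in>insert k w. \<pi> j = sh m j" using Inc1_sh[OF y(3)] by blast
  have z: "z = insert (sh m k) (sh m ` w)" using y(1) kw(3) m(2) by (auto intro: image_cong)
  have hF: "finite (hat_first F k)" "hat_first F k \<subseteq> binom {k<..} (d - 1)"
    using hat_first_finite[OF F(1)] hat_first_binom[OF F(2)] by auto
  have finIF: "finite (Inc F)" using finite_Inc[OF F(1)] F(2) binom_pos by blast
  show "z \<in> comp_left d (Inc F)"
  proof (cases "k < m")
    case True
    then have smk: "sh m k = k" by (simp add: sh_def)
    have "sh m ` w \<in> Inc (comp_gt k (d - 1) (hat_first F k))" using Inc_intro[OF kw(2) m(1)] .
    then have c: "sh m ` w \<in> comp_gt k (d - 1) (Inc (hat_first F k))" using P kw(1) hF by blast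
    have "Inc (hat_first F k) \<subseteq> hat_first (Inc F) k"
    proof
      fix y' assume "y' \<in> Inc (hat_first F k)"
      then obtain v m' where v: "v \<in> hat_first F k" "m' \<ge> 1" "y' = sh m' ` v"
        using Inc_elem[of y' "hat_first F k"] hF binom_pos by blast
      have vk: "\<forall>x\<in>v. k < x" "insert k v \<in> F" using v(1) by (auto simp: hat_first_def)
      define m'' where "m'' = max m' (k + 1)"
      have "sh m'' ` insert k v = insert k y'"
      proof -
        have "sh m'' x = sh m' x" if "x \<in> v" for x using vk that unfolding m''_def sh_def by auto
        moreover have "sh m'' k = k" unfolding m''_def sh_def by auto
        ultimately show ?thesis using v(3) by (auto intro: image_cong)
      qed
      moreover have "sh m'' ` insert k v \<in> Inc F" using Inc_intro[OF vk(2)] unfolding m''_def by simp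
      moreover have "\<forall>x\<in>y'. k < x" using v(3) vk(1) sh_ge by (auto intro: less_le_trans)
      ultimately show "y' \<in> hat_first (Inc F) k" by (auto simp: hat_first_def)
    qed
    then have "card (Inc (hat_first F k)) \<le> card (hat_first (Inc F) k)"
      using hat_first_finite[OF finIF] by (rule card_mono[rotated])
    then have "sh m ` w \<in> comp_gt k (d - 1) (hat_first (Inc F) k)" using c comp_gt_mono by blast
    then show ?thesis unfolding comp_left_def z smk using kw(1) by auto
  next
    case False
    then have smk: "sh m k = k + 1" by (simp add: sh_def)
    have smw: "sh m ` w = up 1 w"
    proof -
      have "sh m x = x + 1" if "x \<in> w" for x using that wb False unfolding sh_def binom_def by auto
      then show ?thesis unfolding up_def by (auto intro: image_cong)
    qed
    have "up 1 ` hat_first F k \<subseteq> hat_first (Inc F) (k + 1)"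
    proof
      fix y' assume "y' \<in> up 1 ` hat_first F k"
      then obtain v where v: "v \<in> hat_first F k" "y' = up 1 v" by blast
      have vk: "\<forall>x\<in>v. k < x" "insert k v \<in> F" using v(1) by (auto simp: hat_first_def)
      have "sh 1 ` insert k v \<in> Inc F" using Inc_intro[OF vk(2)] by simp
      moreover have "sh 1 ` insert k v = insert (k + 1) y'"
        using kw(1) vk(1) unfolding v(2) up_def sh_def by auto
      moreover have "\<forall>x\<in>y'. k + 1 < x" using vk(1) unfolding v(2) up_def by auto
      ultimately show "y' \<in> hat_first (Inc F) (k + 1)" by (auto simp: hat_first_def)
    qed
    moreover have "inj_on (up 1) (hat_first F k)"
      by (rule inj_on_inverseI[where g="dn 1"]) (simp add: dn_up)
    ultimately have "card (hat_first F k) \<le> card (hat_first (Inc F) (k + 1))"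
      using hat_first_finite[OF finIF] by (metis card_image card_mono)
    then have "up 1 w \<in> comp_gt (k + 1) (d - 1) (hat_first (Inc F) (k + 1))"
      using comp_gt_shift[OF kw(2)] by blast
    then show ?thesis unfolding comp_left_def z smk smw by auto
  qed
qed


lemma comp_below:
  assumes w: "w \<in> comp e G" and G: "\<And>v. v \<in> G \<Longrightarrow> v \<in> binom {0<..} e \<and> (\<forall>x\<in>v. x < k)"
  shows "\<forall>x\<in>w. x < k"
proof (rule ccontr)
  assume "\<not> (\<forall>x\<in>w. x < k)"
  then obtain x where x: "x \<in> w" "x \<ge> k" by auto
  have wb: "w \<in> binom {0<..} e" "card (predset 0 e w) < card G" using w by (auto simp: comp_def comp_gt_iff)
  have "G \<subseteq> predset 0 e w"
  proof
    fix v assume v: "v \<in> G"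
    then have vb: "v \<in> binom {0<..} e" "\<forall>x\<in>v. x < k" using G by auto
    define S where "S = (v - w) \<union> (w - v)"
    have "x \<in> S" using x vb unfolding S_def by auto
    moreover have "finite S" using vb wb unfolding S_def binom_def by auto
    ultimately have "x \<le> Max S" "Max S \<in> S" by (auto intro: Max_in)
    then have "Max S \<in> w" using vb x unfolding S_def by auto
    moreover have "v \<noteq> w" using x vb by auto
    ultimately have "sq_less v w" unfolding sq_less_def S_def by simp
    then show "v \<in> predset 0 e w" using vb by (simp add: predset_def)
  qed
  then have "card G \<le> card (predset 0 e w)" using predset_finite wb(1) binom_pos by (meson card_mono)
  then show False using wb by simp
qed

lemma part_right:
  assumes hyp: "\<And>G. finite G \<Longrightarrow> G \<subseteq> binom {0<..} (d - 1) \<Longrightarrow> Inc (comp (d - 1) G) \<subseteq> comp (d - 1) (Inc G)"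
    and F: "finite F" "F \<subseteq> binom {0<..} d"
  shows "Inc (comp_right d F) \<subseteq> comp_right d (Inc F)"
proof
  fix z assume "z \<in> Inc (comp_right d F)"
  then obtain y \<pi> where y: "z = \<pi> ` y" "y \<in> comp_right d F" "\<pi> \<in> Inc1" by (auto simp: Inc_def)
  then obtain k w where kw: "k \<ge> 1" "w \<in> comp (d - 1) (hat_last F k)" "y = insert k w"
    by (auto simp: comp_right_def)
  have hF: "finite (hat_last F k)" "hat_last F k \<subseteq> binom {0<..} (d - 1)"
    using hat_last_finite[OF F(1)] hat_last_binom[OF F(2)] by auto
  have wb: "w \<in> binom {0<..} (d - 1)" using kw(2) by (simp add: comp_def comp_gt_iff)
  have wk: "\<forall>x\<in>w. x < k" using comp_below[OF kw(2)] hF(2) by (auto simp: hat_last_def)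
  then have "finite (insert k w)" "insert k w \<subseteq> {0<..}" using kw(1) wb by (auto simp: binom_def)
  then obtain m where m: "m \<ge> 1" "\<forall>j\<in>insert k w. \<pi> j = sh m j" using Inc1_sh[OF y(3)] by blast
  have z: "z = insert (sh m k) (sh m ` w)" using y(1) kw(3) m(2) by (auto intro: image_cong)
  have finIF: "finite (Inc F)" using finite_Inc[OF F(1)] F(2) binom_pos by blast
  show "z \<in> comp_right d (Inc F)"
  proof (cases "k < m")
    case True
    then have smk: "sh m k = k" by (simp add: sh_def)
    have smw: "sh m ` w = w" using wk True unfolding sh_def by (auto intro: image_cong)
    have "hat_last F k \<subseteq> hat_last (Inc F) k"
    proof
      fix v assume v: "v \<in> hat_last F k"
      have vk: "\<forall>x\<in>v. x < k" "insert k v \<in> F" using v by (auto simp: hat_last_def)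
      have "sh (k + 1) ` insert k v \<in> Inc F" using Inc_intro[OF vk(2)] by simp
      moreover have "sh (k + 1) ` insert k v = insert k v" using vk(1) unfolding sh_def by (auto intro: image_cong)
      ultimately show "v \<in> hat_last (Inc F) k" using vk(1) by (auto simp: hat_last_def)
    qed
    then have "card (hat_last F k) \<le> card (hat_last (Inc F) k)"
      using hat_last_finite[OF finIF] by (rule card_mono[rotated])
    then have "w \<in> comp (d - 1) (hat_last (Inc F) k)" using kw(2) comp_gt_mono unfolding comp_def by blast
    then show ?thesis unfolding comp_right_def z smk smw using kw(1) by auto
  next
    case False
    then have smk: "sh m k = k + 1" by (simp add: sh_def)
    have "sh m ` w \<in> Inc (comp (d - 1) (hat_last F k))" using Inc_intro[OF kw(2) m(1)] .
    then have c: "sh m ` w \<in> comp (d - 1) (Inc (hat_last F k))" using hyp hF by blast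
    have "Inc (hat_last F k) \<subseteq> hat_last (Inc F) (k + 1)"
    proof
      fix y' assume "y' \<in> Inc (hat_last F k)"
      then obtain v m' where v: "v \<in> hat_last F k" "m' \<ge> 1" "y' = sh m' ` v"
        using Inc_elem[of y' "hat_last F k"] hF binom_pos by blast
      have vk: "\<forall>x\<in>v. x < k" "insert k v \<in> F" using v(1) by (auto simp: hat_last_def)
      define m'' where "m'' = min m' k"
      have "sh m'' ` insert k v = insert (k + 1) y'"
      proof -
        have "sh m'' x = sh m' x" if "x \<in> v" for x using vk that unfolding m''_def sh_def by auto
        moreover have "sh m'' k = k + 1" unfolding m''_def sh_def by auto
        ultimately show ?thesis using v(3) by (auto intro: image_cong)
      qed
      moreover have "sh m'' ` insert k v \<in> Inc F" using Inc_intro[OF vk(2)] v(2) kw(1) unfolding m''_def by simp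
      moreover have "\<forall>x\<in>y'. x < k + 1" using v(3) vk(1) unfolding sh_def by auto
      ultimately show "y' \<in> hat_last (Inc F) (k + 1)" by (auto simp: hat_last_def)
    qed
    then have "card (Inc (hat_last F k)) \<le> card (hat_last (Inc F) (k + 1))"
      using hat_last_finite[OF finIF] by (rule card_mono[rotated])
    then have "sh m ` w \<in> comp (d - 1) (hat_last (Inc F) (k + 1))" using c comp_gt_mono unfolding comp_def by blast
    then show ?thesis unfolding comp_right_def z smk by auto
  qed
qed

theorem lemma3p12:
  fixes d :: nat
  assumes "d \<ge> 2"
    and hyp: "\<And>G. finite G \<Longrightarrow> G \<subseteq> binom {0<..} (d - 1) \<Longrightarrow> Inc (comp (d - 1) G) \<subseteq> comp (d - 1) (Inc G)"
  shows "(\<forall>k\<ge>1. \<forall>G. finite G \<and> G \<subseteq> binom {k<..} (d - 1) \<longrightarrow>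
            Inc (comp_gt k (d - 1) G) \<subseteq> comp_gt k (d - 1) (Inc G))
       \<and> (\<forall>F. finite F \<and> F \<subseteq> binom {0<..} d \<longrightarrow>
            Inc (comp_left d F) \<subseteq> comp_left d (Inc F) \<and>
            Inc (comp_right d F) \<subseteq> comp_right d (Inc F))"
proof -
  have P: "\<forall>k\<ge>1. \<forall>G. finite G \<and> G \<subseteq> binom {k<..} (d - 1) \<longrightarrow>
            Inc (comp_gt k (d - 1) G) \<subseteq> comp_gt k (d - 1) (Inc G)"
    using part1[OF hyp] by blast
  have "Inc (comp_left d F) \<subseteq> comp_left d (Inc F) \<and> Inc (comp_right d F) \<subseteq> comp_right d (Inc F)"
    if "finite F \<and> F \<subseteq> binom {0<..} d" for F
    using part_left[OF P] part_right[OF hyp] that by simp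
  with P show ?thesis by simp
qed

end
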